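(* Let $\Theta=\{\theta_0,\ldots,\theta_n\}\subset\mathbb{R}$ and let $F$ and $G$ be experiments with signal spaces $\mathcal{X}=[\underline{x},\overline{x}]$ and $\mathcal{Y}=[\underline{y},\overline{y}]$ and conditional densities $f(\cdot\mid\theta)$, $g(\cdot\mid\theta)$. Then $F\succeq_{\textup{LB}}G$ if and only if, for every $\boldsymbol{b}=(b_0,\ldots,b_n)\in\mathbb{R}^{n+1}$, \[ \int_{\mathcal{X}}\Big(\sum_{i=0}^{n} b_i f(x\mid\theta_i)\Big)_{+}\,dx\;\geq\;\int_{\mathcal{Y}}\Big(\sum_{i=0}^{n} b_i g(y\mid\theta_i)\Big)_{+}\,dy, \] where $(s)_+=\max(s,0)$.
   Context: States: $\Theta=\{\theta_0,\ldots,\theta_n\}\subset\mathbb{R}$. An experiment $F$ specifies, for each $\theta\in\Theta$, an absolutely continuous distribution $F(\cdot\mid\theta)$ with density $f(\cdot\mid\theta)$ of a signal $X$ taking values in a compact interval $\mathcal{X}=[\underline{x},\overline{x}]$; similarly $G$ has densities $g(\cdot\mid\theta)$ on $\mathcal{Y}=[\underline{y},\overline{y}]$ for a signal $Y$. Let $\widehat{\Delta}_n=\{\boldsymbol{q}\in[0,1]^n:\sum_{i=1}^n q_i\le 1\}$; a prior $\boldsymbol{q}=(q_1,\ldots,q_n)\in\widehat{\Delta}_n$ assigns probability $q_i$ to $\theta_i$ ($i\ge1$) and $q_0=1-\sum_{i=1}^n q_i$ to $\theta_0$. Given $\boldsymbol{q}$, $f_{\boldsymbol{q}}=\sum_{i=0}^n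 q_i f(\cdot\mid\theta_i)$ is the unconditional density of $X$ (distribution $F_{\boldsymbol{q}}$), and the posterior vector is $\boldsymbol{p}_F(x;\boldsymbol{q})=(p_{F,1}(x;\boldsymbol{q}),\ldots,p_{F,n}(x;\boldsymbol{q}))$ with $p_{F,i}(x;\boldsymbol{q})=q_i f(x\mid\theta_i)/f_{\boldsymbol{q}}(x)$; $\boldsymbol{p}_F(\boldsymbol{q})$ denotes the random vector $\boldsymbol{p}_F(X;\boldsymbol{q})$ with $X\sim F_{\boldsymbol{q}}$ (analogously for $G$). For random vectors $\boldsymbol{\mu},\boldsymbol{\nu}$ in $\mathbb{R}^n$ with equal means: $\boldsymbol{\mu}\succeq_{\textup{cx}}\boldsymbol{\nu}$ (convex order) if $\mathbb{E}[C(\boldsymbol{\mu})]\ge\mathbb{E}[C(\boldsymbol{\nu})]$ for all convex $C:\mathbb{R}^n\to\mathbb{R}$; $\boldsymbol{\mu}\succeq_{\textup{lcx}}\boldsymbol{\nu}$ (linear convex order) if $\boldsymbol{b}\cdot\boldsymbol{\mu}\succeq_{\textup{cx}}\boldsymbol{b}\cdot\boldsymbol{\nu}$ for all $\boldsymbol{b}\in\mathbb{R}^n$. The linear-Blackwell order: $F\succeq_{\textup{LB}}G$ if $\boldsymbol{p}_F(\boldsymbol{q})\succeq_{\textup{lcx}}\boldsymbol{p}_G(\boldsymbol{q})$ for every $\boldsymbol{q}\in\widehat{\Delta}_n$. *)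

theory Defs
  imports "HOL-Analysis.Analysis"
begin

(* An is_experiment on the signal space [lo, hi] is given by a function
  f :: real => real => real, with f t x the density of the signal at x in state t. *)

definition is_experiment :: "nat \<Rightarrow> (nat \<Rightarrow> real) \<Rightarrow> real \<Rightarrow> real \<Rightarrow> (real \<Rightarrow> real \<Rightarrow> real) \<Rightarrow> bool" where
  "is_experiment n \<theta> lo hi f \<longleftrightarrow> lo < hi \<and>
     (\<forall>i\<le>n. (\<forall>x\<in>{lo..hi}. 0 \<le> f (\<theta> i) x) \<and>
             f (\<theta> i) integrable_on {lo..hi} \<and> integral {lo..hi} (f (\<theta> i)) = 1)"

definition prior :: "nat \<Rightarrow> (nat \<Rightarrow> real) \<Rightarrow> bool" where
  "prior n q \<longleftrightarrow> (\<forall>i\<in>{1..n}. 0 \<le> q i \<and> q i \<le> 1) \<and> (\<Sum>i=1..n. q i) \<le> 1"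

definition prior_wt :: "nat \<Rightarrow> (nat \<Rightarrow> real) \<Rightarrow> nat \<Rightarrow> real" where
  "prior_wt n q i = (if i = 0 then 1 - (\<Sum>j=1..n. q j) else q i)"

definition mix_density :: "nat \<Rightarrow> (nat \<Rightarrow> real) \<Rightarrow> (real \<Rightarrow> real \<Rightarrow> real) \<Rightarrow> (nat \<Rightarrow> real) \<Rightarrow> real \<Rightarrow> real" where
  "mix_density n \<theta> f q x = (\<Sum>i=0..n. prior_wt n q i * f (\<theta> i) x)"

definition posterior :: "nat \<Rightarrow> (nat \<Rightarrow> real) \<Rightarrow> (real \<Rightarrow> real \<Rightarrow> real) \<Rightarrow> (nat \<Rightarrow> real) \<Rightarrow> nat \<Rightarrow> real \<Rightarrow> real" where
  "posterior n \<theta> f q i x = prior_wt n q i * f (\<theta> i) x / mix_density n \<theta> f q x"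

(* Convex order between scalar random variables phi1(X) and phi2(Y), where X has
  density h1 on [a1,b1] and Y has density h2 on [a2,b2]: equal means, and
  E[C(phi1 X)] >= E[C(phi2 Y)] for every convex C. *)
definition cx_ge :: "real \<Rightarrow> real \<Rightarrow> (real \<Rightarrow> real) \<Rightarrow> (real \<Rightarrow> real) \<Rightarrow>
                     real \<Rightarrow> real \<Rightarrow> (real \<Rightarrow> real) \<Rightarrow> (real \<Rightarrow> real) \<Rightarrow> bool" where
  "cx_ge a1 b1 h1 \<phi>1 a2 b2 h2 \<phi>2 \<longleftrightarrow>
     integral {a1..b1} (\<lambda>x. \<phi>1 x * h1 x) = integral {a2..b2} (\<lambda>y. \<phi>2 y * h2 y) \<and>
     (\<forall>C::real \<Rightarrow> real. convex_on UNIV C \<longrightarrow>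
        integral {a1..b1} (\<lambda>x. C (\<phi>1 x) * h1 x) \<ge> integral {a2..b2} (\<lambda>y. C (\<phi>2 y) * h2 y))"

definition post_lcx_ge :: "nat \<Rightarrow> (nat \<Rightarrow> real) \<Rightarrow> (nat \<Rightarrow> real) \<Rightarrow>
     real \<Rightarrow> real \<Rightarrow> (real \<Rightarrow> real \<Rightarrow> real) \<Rightarrow> real \<Rightarrow> real \<Rightarrow> (real \<Rightarrow> real \<Rightarrow> real) \<Rightarrow> bool" where
  "post_lcx_ge n \<theta> q xl xu f yl yu g \<longleftrightarrow>
     (\<forall>b::nat \<Rightarrow> real.
        cx_ge xl xu (mix_density n \<theta> f q) (\<lambda>x. \<Sum>i=1..n. b i * posterior n \<theta> f q i x)
              yl yu (mix_density n \<theta> g q) (\<lambda>y. \<Sum>i=1..n. b i * posterior n \<theta> g q i y))"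

definition LB_ge :: "nat \<Rightarrow> (nat \<Rightarrow> real) \<Rightarrow>
     real \<Rightarrow> real \<Rightarrow> (real \<Rightarrow> real \<Rightarrow> real) \<Rightarrow> real \<Rightarrow> real \<Rightarrow> (real \<Rightarrow> real \<Rightarrow> real) \<Rightarrow> bool" where
  "LB_ge n \<theta> xl xu f yl yu g \<longleftrightarrow> (\<forall>q. prior n q \<longrightarrow> post_lcx_ge n \<theta> q xl xu f yl yu g)"

end

theory Submission
  imports Defs
begin

lemma convex_approx:
  fixes C :: "real \<Rightarrow> real"
  assumes cvx: "convex_on UNIV C" and B: "0 < B" and e: "0 < e"
  shows "\<exists>\<alpha> \<beta> (N::nat) (\<gamma>::nat\<Rightarrow>real) (t::nat\<Rightarrow>real). (\<forall>k<N. 0 \<le> \<gamma> k) \<and>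
     (\<forall>y\<in>{-B..B}. \<bar>C y - (\<alpha> + \<beta>*y + (\<Sum>k<N. \<gamma> k * max (y - t k) 0))\<bar> \<le> e)"
proof -
  have "continuous_on UNIV C" using convex_on_continuous[OF open_UNIV cvx] .
  then have "continuous_on {-B..B} C" by (rule continuous_on_subset) auto
  then have "uniformly_continuous_on {-B..B} C"
    by (intro compact_uniformly_continuous) auto
  then obtain d where d: "d > 0" and dC: "\<And>x x'. x \<in> {-B..B} \<Longrightarrow> x' \<in> {-B..B} \<Longrightarrow> dist x' x < d \<Longrightarrow> dist (C x') (C x) < e"
    using e unfolding uniformly_continuous_on_def by metis
  obtain N :: nat where N: "2*B/d < real N" using reals_Archimedean2 by blast
  have Npos: "N > 0" using N B d by (cases N) (auto simp: field_simps)
  define h where "h = 2*B / real N"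
  have hpos: "h > 0" using B Npos by (simp add: h_def)
  have hd: "h < d" using N d Npos B by (simp add: h_def field_simps)
  define t where "t k = -B + real k * h" for k :: nat
  define s where "s k = (C (t (Suc k)) - C (t k)) / h" for k
  define \<gamma> where "\<gamma> k = (if k = 0 then 0 else s k - s (k - 1))" for k
  define D where "D m y = C (t 0) + s 0 * (y - t 0) + (\<Sum>k<m. \<gamma> k * max (y - t k) 0)" for m y
  have tN: "t N = B" using Npos by (simp add: t_def h_def)
  have tSuc: "t (Suc k) = t k + h" for k by (simp add: t_def algebra_simps)
  have tmono: "k \<le> m \<Longrightarrow> t k \<le> t m" for k m using hpos by (simp add: t_def mult_right_mono)
  have sh: "s k * h = C (t (Suc k)) - C (t k)" for k using hpos by (simp add: s_def)
  have claim1: "j < N \<Longrightarrow> t j \<le> y \<Longrightarrow> D (Suc j) y = C (t j) + s j * (y - t j)" for j y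
  proof (induction j)
    case 0 then show ?case by (simp add: D_def \<gamma>_def)
  next
    case (Suc j)
    have "t j \<le> y" using Suc.prems tmono[of j "Suc j"] by simp
    then have IH: "D (Suc j) y = C (t j) + s j * (y - t j)" using Suc by simp
    have "D (Suc (Suc j)) y = D (Suc j) y + \<gamma> (Suc j) * max (y - t (Suc j)) 0"
      by (simp add: D_def)
    also have "\<dots> = C (t j) + s j * (y - t j) + (s (Suc j) - s j) * (y - t (Suc j))"
      using IH Suc.prems by (simp add: \<gamma>_def)
    also have "\<dots> = C (t j) + s j * h + s (Suc j) * (y - t (Suc j))"
      by (simp add: tSuc algebra_simps)
    also have "\<dots> = C (t (Suc j)) + s (Suc j) * (y - t (Suc j))" using sh[of j] by simp
    finally show ?case .
  qed
  have claim2: "m \<le> N \<Longrightarrow> y \<le> t m \<Longrightarrow> D N y = D m y" for m y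
  proof -
    assume m: "m \<le> N" and y: "y \<le> t m"
    have "(\<Sum>k<N. \<gamma> k * max (y - t k) 0) = (\<Sum>k<m. \<gamma> k * max (y - t k) 0) + (\<Sum>k\<in>{m..<N}. \<gamma> k * max (y - t k) 0)"
      using m by (simp add: lessThan_atLeast0 sum.atLeastLessThan_concat)
    also have "(\<Sum>k\<in>{m..<N}. \<gamma> k * max (y - t k) 0) = 0"
    proof (rule sum.neutral, rule ballI)
      fix k assume "k \<in> {m..<N}"
      then have "y \<le> t k" using tmono[of m k] y by auto
      then show "\<gamma> k * max (y - t k) 0 = 0" by simp
    qed
    finally show ?thesis by (simp add: D_def)
  qed
  have gam: "\<forall>k<N. 0 \<le> \<gamma> k"
  proof (intro allI impI)
    fix k assume "k < N"
    show "0 \<le> \<gamma> k"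
    proof (cases k)
      case 0 then show ?thesis by (simp add: \<gamma>_def)
    next
      case (Suc j)
      have mid: "t (Suc j) = (1 - 1/2) *\<^sub>R t j + (1/2) *\<^sub>R t (Suc (Suc j))"
        by (simp add: tSuc field_simps)
      have "C (t (Suc j)) \<le> (1 - 1/2) * C (t j) + (1/2) * C (t (Suc (Suc j)))"
        unfolding mid by (rule convex_onD[OF cvx]) auto
      then have "C (t (Suc j)) - C (t j) \<le> C (t (Suc (Suc j))) - C (t (Suc j))" by simp
      then have "s j \<le> s (Suc j)" using hpos unfolding s_def by (simp add: divide_right_mono)
      then show ?thesis by (simp add: \<gamma>_def Suc)
    qed
  qed
  have approx: "\<bar>C y - D N y\<bar> \<le> e" if y: "y \<in> {-B..B}" for y
  proof -
    obtain j where j: "j < N" "t j \<le> y" "y \<le> t (Suc j)"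
    proof (cases "y = B")
      case True
      then show ?thesis using that[of "N - 1"] Npos tN tmono[of "N-1" N] by auto
    next
      case False
      define r where "r = (y + B) / h"
      have r0: "0 \<le> r" using y hpos by (simp add: r_def)
      have rN: "r < N" using y False hpos Npos by (simp add: r_def h_def field_simps)
      define j where "j = nat \<lfloor>r\<rfloor>"
      have j1: "real j \<le> r" "r < real j + 1" using r0 by (simp_all add: j_def)
      have "j < N" using j1 rN by linarith
      moreover have "t j \<le> y" using j1 hpos by (simp add: t_def r_def field_simps)
      moreover have "y \<le> t (Suc j)" using j1 hpos by (simp add: t_def r_def field_simps)
      ultimately show ?thesis using that by blast
    qed
    have DN: "D N y = C (t j) + s j * (y - t j)"
      using claim2[of "Suc j" y] claim1[of j y] j by simp
    define l where "l = (y - t j) / h"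
    have l: "0 \<le> l" "l \<le> 1" using j hpos tSuc[of j] by (auto simp: l_def field_simps)
    have DN2: "D N y = (1 - l) * C (t j) + l * C (t (Suc j))"
    proof -
      have "(1 - l) * C (t j) + l * C (t (Suc j)) = C (t j) + l * (s j * h)"
        unfolding sh by (simp add: algebra_simps)
      also have "\<dots> = C (t j) + s j * (y - t j)" using hpos by (simp add: l_def)
      finally show ?thesis using DN by simp
    qed
    have tjB: "t j \<in> {-B..B}" "t (Suc j) \<in> {-B..B}" proof -
      have "t 0 \<le> t j" "t (Suc j) \<le> t N" using tmono j(1) by auto
      then show "t j \<in> {-B..B}" "t (Suc j) \<in> {-B..B}" using y j tN by (auto simp: t_def)
    qed
    have c1: "\<bar>C (t j) - C y\<bar> < e" using dC[OF y tjB(1)] j hd tSuc[of j] by (simp add: dist_real_def)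
    have c2: "\<bar>C (t (Suc j)) - C y\<bar> < e" using dC[OF y tjB(2)] j hd tSuc[of j] by (simp add: dist_real_def)
    have "C y - D N y = (1 - l) * (C y - C (t j)) + l * (C y - C (t (Suc j)))"
      by (simp add: DN2 algebra_simps)
    also have "\<bar>\<dots>\<bar> \<le> (1 - l) * e + l * e"
    proof -
      have "\<bar>(1 - l) * (C y - C (t j))\<bar> \<le> (1 - l) * e"
        using l c1 by (simp add: abs_mult mult_left_mono)
      moreover have "\<bar>l * (C y - C (t (Suc j)))\<bar> \<le> l * e"
        using l c2 by (simp add: abs_mult mult_left_mono)
      ultimately show ?thesis by linarith
    qed
    finally show ?thesis by (simp add: algebra_simps)
  qed
  show ?thesis
    apply (rule exI[of _ "C (t 0) - s 0 * t 0"], rule exI[of _ "s 0"], rule exI[of _ N],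
           rule exI[of _ \<gamma>], rule exI[of _ t])
    using gam approx by (simp add: D_def algebra_simps)
qed

definition hingef :: "real \<Rightarrow> real \<Rightarrow> nat \<Rightarrow> (nat \<Rightarrow> real) \<Rightarrow> (nat \<Rightarrow> real) \<Rightarrow> real \<Rightarrow> real" where
  "hingef \<alpha> \<beta> N \<gamma> t y = \<alpha> + \<beta>*y + (\<Sum>k<N. \<gamma> k * max (y - t k) 0)"

definition good_side :: "real \<Rightarrow> real \<Rightarrow> (real \<Rightarrow> real) \<Rightarrow> (real \<Rightarrow> real) \<Rightarrow> real \<Rightarrow> bool" where
  "good_side a b h p B \<longleftrightarrow> (\<forall>x\<in>{a..b}. 0 \<le> h x \<and> \<bar>p x\<bar> \<le> B) \<and> (h has_integral 1) {a..b} \<and>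
     (\<lambda>x. p x * h x) integrable_on {a..b} \<and> (\<forall>t. (\<lambda>x. max (p x - t) 0 * h x) integrable_on {a..b})"

lemma side_L:
  assumes "good_side a b h p B"
  shows "((\<lambda>x. hingef \<alpha> \<beta> N \<gamma> t (p x) * h x) has_integral
     (\<alpha> + \<beta> * integral {a..b} (\<lambda>x. p x * h x) + (\<Sum>k<N. \<gamma> k * integral {a..b} (\<lambda>x. max (p x - t k) 0 * h x)))) {a..b}"
proof -
  have h1: "(h has_integral 1) {a..b}" and pi: "(\<lambda>x. p x * h x) integrable_on {a..b}"
    and hi: "\<And>t. (\<lambda>x. max (p x - t) 0 * h x) integrable_on {a..b}"
    using assms by (auto simp: good_side_def)
  have eq: "(\<lambda>x. hingef \<alpha> \<beta> N \<gamma> t (p x) * h x) = (\<lambda>x. \<alpha> * h x + \<beta> * (p x * h x) + (\<Sum>k<N. \<gamma> k * (max (p x - t k) 0 * h x)))"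
    by (simp add: hingef_def distrib_right sum_distrib_right mult.assoc)
  show ?thesis unfolding eq
    apply (intro has_integral_add has_integral_mult_right has_integral_sum finite_lessThan)
    using has_integral_mult_right[OF h1, of \<alpha>] pi hi by (auto intro: integrable_integral)
qed

lemma side_C:
  assumes gs: "good_side a b h p B" and cvx: "convex_on UNIV C" and B: "B > 0"
  shows "(\<lambda>x. C (p x) * h x) integrable_on {a..b}"
    and "e > 0 \<Longrightarrow> (\<forall>y\<in>{-B..B}. \<bar>C y - hingef \<alpha> \<beta> N \<gamma> t y\<bar> \<le> e) \<Longrightarrow>
       \<bar>integral {a..b} (\<lambda>x. C (p x) * h x) - integral {a..b} (\<lambda>x. hingef \<alpha> \<beta> N \<gamma> t (p x) * h x)\<bar> \<le> e"
proof -
  have h0: "\<And>x. x \<in> {a..b} \<Longrightarrow> 0 \<le> h x" and pB: "\<And>x. x \<in> {a..b} \<Longrightarrow> \<bar>p x\<bar> \<le> B"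
    and h1: "(h has_integral 1) {a..b}" using gs by (auto simp: good_side_def)
  have sq: "\<And>x. x \<in> {a..b} \<Longrightarrow> (hingef \<alpha> \<beta> N \<gamma> t (p x) + (-e)) * h x \<le> C (p x) * h x \<and> C (p x) * h x \<le> (hingef \<alpha> \<beta> N \<gamma> t (p x) + e) * h x"
    if ap: "\<forall>y\<in>{-B..B}. \<bar>C y - hingef \<alpha> \<beta> N \<gamma> t y\<bar> \<le> e" for e \<alpha> \<beta> N \<gamma> t
  proof -
    fix x assume x: "x \<in> {a..b}"
    have "p x \<in> {-B..B}" using pB[OF x] by auto
    then have "\<bar>C (p x) - hingef \<alpha> \<beta> N \<gamma> t (p x)\<bar> \<le> e" using ap by blast
    then show "(hingef \<alpha> \<beta> N \<gamma> t (p x) + (-e)) * h x \<le> C (p x) * h x \<and> C (p x) * h x \<le> (hingef \<alpha> \<beta> N \<gamma> t (p x) + e) * h x"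
      using h0[OF x] by (auto intro!: mult_right_mono)
  qed
  have pm: "((\<lambda>x. (hingef \<alpha> \<beta> N \<gamma> t (p x) + c) * h x) has_integral
      (integral {a..b} (\<lambda>x. hingef \<alpha> \<beta> N \<gamma> t (p x) * h x) + c)) {a..b}" for \<alpha> \<beta> N \<gamma> t c
  proof -
    have "((\<lambda>x. hingef \<alpha> \<beta> N \<gamma> t (p x) * h x + c * h x) has_integral
      (integral {a..b} (\<lambda>x. hingef \<alpha> \<beta> N \<gamma> t (p x) * h x) + c * 1)) {a..b}"
      using side_L[OF gs, THEN has_integral_integrable, of \<alpha> \<beta> N \<gamma> t] h1
      by (intro has_integral_add has_integral_mult_right) (auto intro: integrable_integral)
    then show ?thesis by (simp add: algebra_simps)
  qed
  show int: "(\<lambda>x. C (p x) * h x) integrable_on {a..b}"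
  proof (rule integrable_straddle)
    fix e :: real assume e: "e > 0"
    have e3: "e/3 > 0" using e by simp
    from convex_approx[OF cvx B e3] obtain \<alpha> \<beta> and N :: nat and \<gamma> t where
        "\<forall>y\<in>{-B..B}. \<bar>C y - (\<alpha> + \<beta>*y + (\<Sum>k<N. \<gamma> k * max (y - t k) 0))\<bar> \<le> e/3"
      by (elim exE conjE) blast
    then have ap: "\<forall>y\<in>{-B..B}. \<bar>C y - hingef \<alpha> \<beta> N \<gamma> t y\<bar> \<le> e/3"
      by (simp add: hingef_def)
    define I where "I = integral {a..b} (\<lambda>x. hingef \<alpha> \<beta> N \<gamma> t (p x) * h x)"
    have g1: "((\<lambda>x. (hingef \<alpha> \<beta> N \<gamma> t (p x) + (-(e/3))) * h x) has_integral (I + (-(e/3)))) {a..b}"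
      unfolding I_def by (rule pm)
    have g2: "((\<lambda>x. (hingef \<alpha> \<beta> N \<gamma> t (p x) + e/3) * h x) has_integral (I + e/3)) {a..b}"
      unfolding I_def by (rule pm)
    have g3: "\<bar>(I + (-(e/3))) - (I + e/3)\<bar> < e" using e by simp
    have g4: "\<forall>x\<in>{a..b}. (hingef \<alpha> \<beta> N \<gamma> t (p x) + (-(e/3))) * h x \<le> C (p x) * h x \<and> C (p x) * h x \<le> (hingef \<alpha> \<beta> N \<gamma> t (p x) + e/3) * h x"
      using sq[OF ap] by blast
    show "\<exists>g k i j. (g has_integral i) {a..b} \<and> (k has_integral j) {a..b} \<and> \<bar>i - j\<bar> < e \<and>
            (\<forall>x\<in>{a..b}. g x \<le> C (p x) * h x \<and> C (p x) * h x \<le> k x)"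
      using g1 g2 g3 g4 by blast
  qed
  show "\<bar>integral {a..b} (\<lambda>x. C (p x) * h x) - integral {a..b} (\<lambda>x. hingef \<alpha> \<beta> N \<gamma> t (p x) * h x)\<bar> \<le> e"
    if "e > 0" "\<forall>y\<in>{-B..B}. \<bar>C y - hingef \<alpha> \<beta> N \<gamma> t y\<bar> \<le> e"
  proof -
    have sq': "\<And>x. x \<in> {a..b} \<Longrightarrow> (hingef \<alpha> \<beta> N \<gamma> t (p x) + (-e)) * h x \<le> C (p x) * h x"
      "\<And>x. x \<in> {a..b} \<Longrightarrow> C (p x) * h x \<le> (hingef \<alpha> \<beta> N \<gamma> t (p x) + e) * h x"
      using sq[OF that(2)] by blast+
    have ci: "((\<lambda>x. C (p x) * h x) has_integral integral {a..b} (\<lambda>x. C (p x) * h x)) {a..b}"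
      using int by (rule integrable_integral)
    have "integral {a..b} (\<lambda>x. hingef \<alpha> \<beta> N \<gamma> t (p x) * h x) + (-e) \<le> integral {a..b} (\<lambda>x. C (p x) * h x)"
      by (rule has_integral_le[OF pm ci sq'(1)])
    moreover have "integral {a..b} (\<lambda>x. C (p x) * h x) \<le> integral {a..b} (\<lambda>x. hingef \<alpha> \<beta> N \<gamma> t (p x) * h x) + e"
      by (rule has_integral_le[OF ci pm sq'(2)])
    ultimately show ?thesis by linarith
  qed
qed

lemma order_lemma:
  assumes gs1: "good_side a1 b1 h1 p1 B" and gs2: "good_side a2 b2 h2 p2 B" and B: "B > 0"
    and mean: "integral {a1..b1} (\<lambda>x. p1 x * h1 x) = integral {a2..b2} (\<lambda>x. p2 x * h2 x)"
    and hinge: "\<And>t. integral {a2..b2} (\<lambda>x. max (p2 x - t) 0 * h2 x) \<le> integral {a1..b1} (\<lambda>x. max (p1 x - t) 0 * h1 x)"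
    and cvx: "convex_on UNIV C"
  shows "integral {a2..b2} (\<lambda>x. C (p2 x) * h2 x) \<le> integral {a1..b1} (\<lambda>x. C (p1 x) * h1 x)"
proof (rule field_le_epsilon)
  fix e :: real assume e: "e > 0"
  have e2: "e/2 > 0" using e by simp
  from convex_approx[OF cvx B e2] obtain \<alpha> \<beta> and N :: nat and \<gamma> t where
      gam: "\<forall>k<N. 0 \<le> \<gamma> k" and
      "\<forall>y\<in>{-B..B}. \<bar>C y - (\<alpha> + \<beta>*y + (\<Sum>k<N. \<gamma> k * max (y - t k) 0))\<bar> \<le> e/2"
    by (elim exE conjE) blast
  then have ap: "\<forall>y\<in>{-B..B}. \<bar>C y - hingef \<alpha> \<beta> N \<gamma> t y\<bar> \<le> e/2"
    by (simp add: hingef_def)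
  have c1: "\<bar>integral {a1..b1} (\<lambda>x. C (p1 x) * h1 x) - integral {a1..b1} (\<lambda>x. hingef \<alpha> \<beta> N \<gamma> t (p1 x) * h1 x)\<bar> \<le> e/2"
    by (rule side_C(2)[OF gs1 cvx B e2 ap])
  have c2: "\<bar>integral {a2..b2} (\<lambda>x. C (p2 x) * h2 x) - integral {a2..b2} (\<lambda>x. hingef \<alpha> \<beta> N \<gamma> t (p2 x) * h2 x)\<bar> \<le> e/2"
    by (rule side_C(2)[OF gs2 cvx B e2 ap])
  have L1: "integral {a1..b1} (\<lambda>x. hingef \<alpha> \<beta> N \<gamma> t (p1 x) * h1 x) =
     \<alpha> + \<beta> * integral {a1..b1} (\<lambda>x. p1 x * h1 x) + (\<Sum>k<N. \<gamma> k * integral {a1..b1} (\<lambda>x. max (p1 x - t k) 0 * h1 x))"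
    by (rule integral_unique[OF side_L[OF gs1]])
  have L2: "integral {a2..b2} (\<lambda>x. hingef \<alpha> \<beta> N \<gamma> t (p2 x) * h2 x) =
     \<alpha> + \<beta> * integral {a2..b2} (\<lambda>x. p2 x * h2 x) + (\<Sum>k<N. \<gamma> k * integral {a2..b2} (\<lambda>x. max (p2 x - t k) 0 * h2 x))"
    by (rule integral_unique[OF side_L[OF gs2]])
  have "(\<Sum>k<N. \<gamma> k * integral {a2..b2} (\<lambda>x. max (p2 x - t k) 0 * h2 x)) \<le>
        (\<Sum>k<N. \<gamma> k * integral {a1..b1} (\<lambda>x. max (p1 x - t k) 0 * h1 x))"
    using gam hinge by (intro sum_mono mult_left_mono) auto
  then have "integral {a2..b2} (\<lambda>x. hingef \<alpha> \<beta> N \<gamma> t (p2 x) * h2 x) \<le> integral {a1..b1} (\<lambda>x. hingef \<alpha> \<beta> N \<gamma> t (p1 x) * h1 x)"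
    unfolding L1 L2 mean by simp
  then show "integral {a2..b2} (\<lambda>x. C (p2 x) * h2 x) \<le> integral {a1..b1} (\<lambda>x. C (p1 x) * h1 x) + e"
    using c1 c2 by linarith
qed

lemma prior_wt_facts:
  assumes "prior n q"
  shows "\<And>i. i \<le> n \<Longrightarrow> 0 \<le> prior_wt n q i" and "(\<Sum>i=0..n. prior_wt n q i) = 1"
proof -
  show "0 \<le> prior_wt n q i" if "i \<le> n" for i
    using assms that by (cases "i = 0") (auto simp: prior_wt_def prior_def)
  show "(\<Sum>i=0..n. prior_wt n q i) = 1"
    by (simp add: sum.atLeast_Suc_atMost prior_wt_def)
qed

lemma exp_side:
  fixes b :: "nat \<Rightarrow> real"
  assumes ex: "is_experiment n \<theta> lo hi f" and pr: "prior n q"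
  defines "h \<equiv> mix_density n \<theta> f q" and "p \<equiv> (\<lambda>x. \<Sum>i=1..n. b i * posterior n \<theta> f q i x)"
  shows "\<And>x t. x \<in> {lo..hi} \<Longrightarrow> max (p x - t) 0 * h x =
            max (\<Sum>i=0..n. (((if i=0 then 0 else b i) - t) * prior_wt n q i) * f (\<theta> i) x) 0"
    and "good_side lo hi h p (1 + (\<Sum>i=1..n. \<bar>b i\<bar>))"
    and "integral {lo..hi} (\<lambda>x. p x * h x) = (\<Sum>i=0..n. (if i=0 then 0 else b i) * prior_wt n q i)"
proof -
  define w where "w = prior_wt n q"
  define b' where "b' i = (if i = 0 then 0 else b i)" for i :: nat
  have w0: "\<And>i. i \<le> n \<Longrightarrow> 0 \<le> w i" and w1: "(\<Sum>i=0..n. w i) = 1"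
    using prior_wt_facts[OF pr] by (auto simp: w_def)
  have f0: "\<And>i x. i \<le> n \<Longrightarrow> x \<in> {lo..hi} \<Longrightarrow> 0 \<le> f (\<theta> i) x"
    and fi: "\<And>i. i \<le> n \<Longrightarrow> (f (\<theta> i) has_integral 1) {lo..hi}"
    using ex unfolding is_experiment_def by (auto simp: has_integral_integral)
  have hx: "h x = (\<Sum>i=0..n. w i * f (\<theta> i) x)" for x
    by (simp add: h_def mix_density_def w_def)
  have wf0: "\<And>i x. i \<le> n \<Longrightarrow> x \<in> {lo..hi} \<Longrightarrow> 0 \<le> w i * f (\<theta> i) x"
    using w0 f0 by simp
  have h0: "\<And>x. x \<in> {lo..hi} \<Longrightarrow> 0 \<le> h x"
    unfolding hx using wf0 by (auto intro: sum_nonneg)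
  have sum01: "(\<Sum>i=0..n. b' i * g i) = (\<Sum>i=1..n. b i * g i)" for g :: "nat \<Rightarrow> real"
    by (simp add: sum.atLeast_Suc_atMost b'_def)
  have pw: "p x * h x = (\<Sum>i=0..n. b' i * (w i * f (\<theta> i) x))" if x: "x \<in> {lo..hi}" for x
  proof (cases "h x = 0")
    case True
    then have "\<forall>i\<in>{0..n}. w i * f (\<theta> i) x = 0"
      using sum_nonneg_eq_0_iff[of "{0..n}" "\<lambda>i. w i * f (\<theta> i) x"] wf0 x hx by auto
    then have "(\<Sum>i=0..n. b' i * (w i * f (\<theta> i) x)) = 0"
      by (intro sum.neutral) simp
    then show ?thesis using True by simp
  next
    case False
    have "p x * h x = (\<Sum>i=1..n. b i * posterior n \<theta> f q i x * h x)"
      by (simp add: p_def sum_distrib_right)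
    also have "\<dots> = (\<Sum>i=1..n. b i * (w i * f (\<theta> i) x))"
      using False by (intro sum.cong) (auto simp: posterior_def h_def w_def)
    finally show ?thesis by (simp add: sum01)
  qed
  show key: "max (p x - t) 0 * h x =
            max (\<Sum>i=0..n. (((if i=0 then 0 else b i) - t) * prior_wt n q i) * f (\<theta> i) x) 0"
    if x: "x \<in> {lo..hi}" for x t
  proof -
    have "max (p x - t) 0 * h x = max ((p x - t) * h x) 0"
    proof (cases "p x - t \<ge> 0")
      case True
      then have "(p x - t) * h x \<ge> 0" using h0[OF x] by simp
      then show ?thesis using True by simp
    next
      case False
      then have "(p x - t) * h x \<le> 0" using h0[OF x] by (simp add: mult_nonpos_nonneg)
      then show ?thesis using False by simp
    qed
    also have "(p x - t) * h x = p x * h x - t * h x" by (simp add: algebra_simps)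
    also have "p x * h x - t * h x = (\<Sum>i=0..n. ((b' i - t) * w i) * f (\<theta> i) x)"
      apply (subst pw[OF x], subst hx)
      by (simp add: sum_distrib_left sum_subtractf[symmetric] algebra_simps)
    finally show ?thesis by (simp add: b'_def w_def)
  qed
  have hint: "(h has_integral 1) {lo..hi}"
  proof -
    have "((\<lambda>x. \<Sum>i=0..n. w i * f (\<theta> i) x) has_integral (\<Sum>i=0..n. w i * 1)) {lo..hi}"
      using fi by (intro has_integral_sum has_integral_mult_right) auto
    then show ?thesis using w1 by (simp add: hx[abs_def])
  qed
  have phint: "((\<lambda>x. p x * h x) has_integral (\<Sum>i=0..n. b' i * (w i * 1))) {lo..hi}"
  proof -
    have "((\<lambda>x. \<Sum>i=0..n. b' i * (w i * f (\<theta> i) x)) has_integral (\<Sum>i=0..n. b' i * (w i * 1))) {lo..hi}"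
      using fi by (intro has_integral_sum has_integral_mult_right) auto
    then show ?thesis using has_integral_cong[of "{lo..hi}" "\<lambda>x. p x * h x", OF pw] by simp
  qed
  show "integral {lo..hi} (\<lambda>x. p x * h x) = (\<Sum>i=0..n. (if i=0 then 0 else b i) * prior_wt n q i)"
    using integral_unique[OF phint] by (simp add: b'_def w_def)
  have hingeint: "(\<lambda>x. max (p x - t) 0 * h x) integrable_on {lo..hi}" for t
  proof -
    have "(\<lambda>x. \<Sum>i=0..n. (((if i=0 then 0 else b i) - t) * prior_wt n q i) * f (\<theta> i) x) absolutely_integrable_on {lo..hi}"
    proof (intro absolutely_integrable_sum finite_atLeastAtMost)
      fix i assume "i \<in> {0..n}"
      then have "f (\<theta> i) absolutely_integrable_on {lo..hi}"
        using fi f0 by (intro nonnegative_absolutely_integrable_1) (auto intro: has_integral_integrable)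
      then show "(\<lambda>x. (((if i=0 then 0 else b i) - t) * prior_wt n q i) * f (\<theta> i) x) absolutely_integrable_on {lo..hi}"
        by (intro set_integrable_mult_right) (simp add: absolutely_integrable_on_def)
    qed
    then have "(\<lambda>x. max (\<Sum>i=0..n. (((if i=0 then 0 else b i) - t) * prior_wt n q i) * f (\<theta> i) x) 0) absolutely_integrable_on {lo..hi}"
      by (intro absolutely_integrable_max_1) auto
    then have "(\<lambda>x. max (\<Sum>i=0..n. (((if i=0 then 0 else b i) - t) * prior_wt n q i) * f (\<theta> i) x) 0) integrable_on {lo..hi}"
      by (simp add: absolutely_integrable_on_def)
    then show ?thesis using integrable_cong[of "{lo..hi}" "\<lambda>x. max (p x - t) 0 * h x", OF key] by blast
  qed
  have pB: "\<bar>p x\<bar> \<le> 1 + (\<Sum>i=1..n. \<bar>b i\<bar>)" if x: "x \<in> {lo..hi}" for x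
  proof -
    have post: "0 \<le> posterior n \<theta> f q i x \<and> posterior n \<theta> f q i x \<le> 1" if i: "i \<in> {1..n}" for i
    proof -
      have "w i * f (\<theta> i) x \<le> h x"
        unfolding hx using wf0 x i by (intro member_le_sum) auto
      moreover have "0 \<le> w i * f (\<theta> i) x" using wf0 x i by auto
      ultimately show ?thesis
        by (cases "h x = 0") (auto simp: posterior_def h_def[symmetric] w_def[symmetric] divide_le_eq_1)
    qed
    have "\<bar>p x\<bar> \<le> (\<Sum>i=1..n. \<bar>b i * posterior n \<theta> f q i x\<bar>)"
      unfolding p_def by (rule sum_abs)
    also have "\<dots> \<le> (\<Sum>i=1..n. \<bar>b i\<bar>)"
      using post by (intro sum_mono) (auto simp: abs_mult intro: mult_left_le)
    finally show ?thesis by simp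
  qed
  show "good_side lo hi h p (1 + (\<Sum>i=1..n. \<bar>b i\<bar>))"
    unfolding good_side_def using h0 pB hint phint hingeint by (auto intro: has_integral_integrable)
qed

lemma convex_hinge: "convex_on UNIV (\<lambda>y::real. max (y + c) 0)"
proof (rule convex_onI)
  fix u x y :: real assume u: "0 < u" "u < 1"
  have a: "(1 - u) * (x + c) \<le> (1 - u) * max (x + c) 0" using u by (intro mult_left_mono) auto
  have b: "u * (y + c) \<le> u * max (y + c) 0" using u by (intro mult_left_mono) auto
  have c1: "0 \<le> (1 - u) * max (x + c) 0" using u by simp
  have c2: "0 \<le> u * max (y + c) 0" using u by simp
  have "(1 - u) *\<^sub>R x + u *\<^sub>R y + c = (1 - u) * (x + c) + u * (y + c)" by (simp add: algebra_simps)
  then show "max ((1 - u) *\<^sub>R x + u *\<^sub>R y + c) 0 \<le> (1 - u) * max (x + c) 0 + u * max (y + c) 0"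
    using a b c1 c2 by linarith
qed auto

theorem lemma1:
  fixes n :: nat and \<theta> :: "nat \<Rightarrow> real"
    and xl xu yl yu :: real and f g :: "real \<Rightarrow> real \<Rightarrow> real"
  assumes "inj_on \<theta> {0..n}"
    and exF: "is_experiment n \<theta> xl xu f"
    and exG: "is_experiment n \<theta> yl yu g"
  shows "LB_ge n \<theta> xl xu f yl yu g \<longleftrightarrow>
    (\<forall>b::nat \<Rightarrow> real.
       integral {xl..xu} (\<lambda>x. max (\<Sum>i=0..n. b i * f (\<theta> i) x) 0)
         \<ge> integral {yl..yu} (\<lambda>y. max (\<Sum>i=0..n. b i * g (\<theta> i) y) 0))"
proof
  assume LB: "LB_ge n \<theta> xl xu f yl yu g"
  show "\<forall>b::nat \<Rightarrow> real.
       integral {xl..xu} (\<lambda>x. max (\<Sum>i=0..n. b i * f (\<theta> i) x) 0)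
         \<ge> integral {yl..yu} (\<lambda>y. max (\<Sum>i=0..n. b i * g (\<theta> i) y) 0)"
  proof
    fix b :: "nat \<Rightarrow> real"
    define q where "q = (\<lambda>i::nat. 1 / real (n+1))"
    have sq: "(\<Sum>i=1..n. q i) = real n / real (n+1)" by (simp add: q_def)
    have pr: "prior n q" unfolding prior_def using sq by (auto simp: q_def field_simps)
    have wq: "prior_wt n q i = 1 / real (n+1)" for i
      using sq by (auto simp: prior_wt_def q_def field_simps)
    define b' where "b' = (\<lambda>i. b i - b 0)"
    define C where "C = (\<lambda>y. real (n+1) * max (y + b 0) 0)"
    have cvx: "convex_on UNIV C" unfolding C_def by (intro convex_on_cmul convex_hinge) auto
    have "post_lcx_ge n \<theta> q xl xu f yl yu g" using LB pr by (simp add: LB_ge_def)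
    then have ineq: "integral {yl..yu} (\<lambda>y. C (\<Sum>i=1..n. b' i * posterior n \<theta> g q i y) * mix_density n \<theta> g q y)
       \<le> integral {xl..xu} (\<lambda>x. C (\<Sum>i=1..n. b' i * posterior n \<theta> f q i x) * mix_density n \<theta> f q x)"
      using cvx unfolding post_lcx_ge_def cx_ge_def by blast
    have coef: "(((if i=0 then 0 else b' i) - - b 0) * prior_wt n q i) * real (n+1) = b i" for i
      by (simp add: wq b'_def)
    have eqF: "C (\<Sum>i=1..n. b' i * posterior n \<theta> f q i x) * mix_density n \<theta> f q x = max (\<Sum>i=0..n. b i * f (\<theta> i) x) 0"
      if x: "x \<in> {xl..xu}" for x
    proof -
      have "C (\<Sum>i=1..n. b' i * posterior n \<theta> f q i x) * mix_density n \<theta> f q x =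
        real (n+1) * (max ((\<Sum>i=1..n. b' i * posterior n \<theta> f q i x) - - b 0) 0 * mix_density n \<theta> f q x)"
        by (simp add: C_def)
      also have "\<dots> = real (n+1) * max (\<Sum>i=0..n. (((if i=0 then 0 else b' i) - - b 0) * prior_wt n q i) * f (\<theta> i) x) 0"
        by (subst exp_side(1)[OF exF pr x]) (rule refl)
      also have "\<dots> = max (\<Sum>i=0..n. (((if i=0 then 0 else b' i) - - b 0) * prior_wt n q i) * real (n+1) * f (\<theta> i) x) 0"
        by (simp add: sum_distrib_left max_mult_distrib_left algebra_simps del: of_nat_Suc)
      also have "\<dots> = max (\<Sum>i=0..n. b i * f (\<theta> i) x) 0"
        by (simp only: coef)
      finally show ?thesis .
    qed
    have eqG: "C (\<Sum>i=1..n. b' i * posterior n \<theta> g q i x) * mix_density n \<theta> g q x = max (\<Sum>i=0..n. b i * g (\<theta> i) x) 0"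
      if x: "x \<in> {yl..yu}" for x
    proof -
      have "C (\<Sum>i=1..n. b' i * posterior n \<theta> g q i x) * mix_density n \<theta> g q x =
        real (n+1) * (max ((\<Sum>i=1..n. b' i * posterior n \<theta> g q i x) - - b 0) 0 * mix_density n \<theta> g q x)"
        by (simp add: C_def)
      also have "\<dots> = real (n+1) * max (\<Sum>i=0..n. (((if i=0 then 0 else b' i) - - b 0) * prior_wt n q i) * g (\<theta> i) x) 0"
        by (subst exp_side(1)[OF exG pr x]) (rule refl)
      also have "\<dots> = max (\<Sum>i=0..n. (((if i=0 then 0 else b' i) - - b 0) * prior_wt n q i) * real (n+1) * g (\<theta> i) x) 0"
        by (simp add: sum_distrib_left max_mult_distrib_left algebra_simps del: of_nat_Suc)
      also have "\<dots> = max (\<Sum>i=0..n. b i * g (\<theta> i) x) 0"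
        by (simp only: coef)
      finally show ?thesis .
    qed
    show "integral {xl..xu} (\<lambda>x. max (\<Sum>i=0..n. b i * f (\<theta> i) x) 0)
         \<ge> integral {yl..yu} (\<lambda>y. max (\<Sum>i=0..n. b i * g (\<theta> i) y) 0)"
      using ineq integral_cong[of "{xl..xu}", OF eqF] integral_cong[of "{yl..yu}", OF eqG] by simp
  qed
next
  assume H: "\<forall>b::nat \<Rightarrow> real.
       integral {xl..xu} (\<lambda>x. max (\<Sum>i=0..n. b i * f (\<theta> i) x) 0)
         \<ge> integral {yl..yu} (\<lambda>y. max (\<Sum>i=0..n. b i * g (\<theta> i) y) 0)"
  show "LB_ge n \<theta> xl xu f yl yu g"
    unfolding LB_ge_def post_lcx_ge_def cx_ge_def
  proof (intro allI impI conjI)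
    fix q b assume pr: "prior n q"
    show "integral {xl..xu} (\<lambda>x. (\<Sum>i=1..n. b i * posterior n \<theta> f q i x) * mix_density n \<theta> f q x) =
          integral {yl..yu} (\<lambda>y. (\<Sum>i=1..n. b i * posterior n \<theta> g q i y) * mix_density n \<theta> g q y)"
      using exp_side(3)[OF exF pr, of b] exp_side(3)[OF exG pr, of b] by simp
    fix C :: "real \<Rightarrow> real" assume cvx: "convex_on UNIV C"
    have Bpos: "0 < 1 + (\<Sum>i=1..n. \<bar>b i\<bar>)"
    proof -
      have "0 \<le> (\<Sum>i=1..n. \<bar>b i\<bar>)" by (rule sum_nonneg) simp
      then show ?thesis by linarith
    qed
    show "integral {yl..yu} (\<lambda>y. C (\<Sum>i=1..n. b i * posterior n \<theta> g q i y) * mix_density n \<theta> g q y)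
        \<le> integral {xl..xu} (\<lambda>x. C (\<Sum>i=1..n. b i * posterior n \<theta> f q i x) * mix_density n \<theta> f q x)"
    proof (rule order_lemma[OF exp_side(2)[OF exF pr, of b] exp_side(2)[OF exG pr, of b] Bpos _ _ cvx])
      show "integral {xl..xu} (\<lambda>x. (\<Sum>i=1..n. b i * posterior n \<theta> f q i x) * mix_density n \<theta> f q x) =
          integral {yl..yu} (\<lambda>y. (\<Sum>i=1..n. b i * posterior n \<theta> g q i y) * mix_density n \<theta> g q y)"
        using exp_side(3)[OF exF pr, of b] exp_side(3)[OF exG pr, of b] by simp
      fix t
      define c where "c i = ((if i=0 then 0 else b i) - t) * prior_wt n q i" for i
      have "integral {yl..yu} (\<lambda>y. max (\<Sum>i=0..n. c i * g (\<theta> i) y) 0)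
          \<le> integral {xl..xu} (\<lambda>x. max (\<Sum>i=0..n. c i * f (\<theta> i) x) 0)" using H by blast
      moreover have "integral {xl..xu} (\<lambda>x. max ((\<Sum>i=1..n. b i * posterior n \<theta> f q i x) - t) 0 * mix_density n \<theta> f q x)
          = integral {xl..xu} (\<lambda>x. max (\<Sum>i=0..n. c i * f (\<theta> i) x) 0)"
        unfolding c_def by (rule integral_cong, rule exp_side(1)[OF exF pr], assumption)
      moreover have "integral {yl..yu} (\<lambda>x. max ((\<Sum>i=1..n. b i * posterior n \<theta> g q i x) - t) 0 * mix_density n \<theta> g q x)
          = integral {yl..yu} (\<lambda>x. max (\<Sum>i=0..n. c i * g (\<theta> i) x) 0)"
        unfolding c_def by (rule integral_cong, rule exp_side(1)[OF exG pr], assumption)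
      ultimately show "integral {yl..yu} (\<lambda>x. max ((\<Sum>i=1..n. b i * posterior n \<theta> g q i x) - t) 0 * mix_density n \<theta> g q x)
          \<le> integral {xl..xu} (\<lambda>x. max ((\<Sum>i=1..n. b i * posterior n \<theta> f q i x) - t) 0 * mix_density n \<theta> f q x)"
        by simp
    qed
  qed
qed

end
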